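(* Let $K$ be a field and $\lambda\in K$ transcendental over the prime field of $K$. Let $q\ge1$ be an integer, and if the characteristic $p$ of $K$ is positive suppose $p$ does not divide $q$. Let $P(z)\in K[z]$ be either $\lambda z(1+z^q)$ or $\lambda z(1+z^q+z^{2q})$. Then $P$ has no parabolic periodic point.
   Context: A periodic point $z_0\in K$ of $P$ of period $n$ (i.e. $P^n(z_0)=z_0$) is parabolic if its multiplier $(P^n)'(z_0)$ is a root of unity. *)

theory Defs
  imports "HOL-Computational_Algebra.Polynomial"
begin

text \<open>Every polynomial over the
  prime field is (up to a nonzero scalar) the image of an integer polynomial.\<close>
definition transcendental_over_prime_field :: "'a::field \<Rightarrow> bool" where
  "transcendental_over_prime_field l \<longleftrightarrow>
     (\<forall>p :: int poly. map_poly of_int p \<noteq> (0 :: 'a poly) \<longrightarrow> poly (map_poly of_int p) l \<noteq> 0)"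

definition poly_iter :: "'a::comm_ring_1 poly \<Rightarrow> nat \<Rightarrow> 'a poly" where
  "poly_iter P n = ((\<lambda>Q. pcompose P Q) ^^ n) [:0, 1:]"

definition root_of_unity :: "'a::field \<Rightarrow> bool" where
  "root_of_unity w \<longleftrightarrow> (\<exists>m::nat. m > 0 \<and> w ^ m = 1)"

definition parabolic_periodic_point :: "'a::field poly \<Rightarrow> 'a \<Rightarrow> bool" where
  "parabolic_periodic_point P z0 \<longleftrightarrow>
     (\<exists>n::nat. n \<ge> 1 \<and> poly (poly_iter P n) z0 = z0 \<and>
        root_of_unity (poly (pderiv (poly_iter P n)) z0))"

end

theory Submission
  imports Defs
begin

lemma Ints_coeff_mult:
  assumes "\<forall>i. coeff p i \<in> \<int>" "\<forall>i. coeff q i \<in> \<int>"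
  shows "\<forall>i. coeff (p*q) i \<in> (\<int>::'a::comm_ring_1 set)"
  using assms by (auto simp: coeff_mult intro!: Ints_sum Ints_mult)

lemma transc:
  fixes l :: "'a::field"
  assumes tr: "transcendental_over_prime_field l" and c: "\<forall>i. coeff p i \<in> \<int>" and nz: "p \<noteq> 0"
  shows "poly p l \<noteq> 0"
proof -
  define g where "g = (\<lambda>c::'a. if c = 0 then (0::int) else (SOME k. c = of_int k))"
  have g0: "g 0 = 0" by (simp add: g_def)
  have gi: "of_int (g c) = c" if "c \<in> \<int>" for c
  proof (cases "c = 0")
    case True then show ?thesis by (simp add: g_def)
  next
    case False
    from that obtain k where "c = of_int k" by (auto elim: Ints_cases)
    then have "c = of_int (SOME k. c = of_int k)" by (rule someI)
    then show ?thesis using False by (simp add: g_def)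
  qed
  have "map_poly of_int (map_poly g p) = map_poly (of_int \<circ> g) p"
    by (rule map_poly_map_poly) (simp_all add: g0)
  also have "\<dots> = p"
  proof (rule map_poly_idI)
    fix x assume "x \<in> set (coeffs p)"
    then have "x \<in> range (coeff p)" using range_coeff by blast
    then show "(of_int \<circ> g) x = x" using c gi by auto
  qed
  finally have e: "map_poly of_int (map_poly g p) = p" .
  show ?thesis using tr nz unfolding transcendental_over_prime_field_def
    by (metis e)
qed

lemma transc_nz:
  fixes l :: "'a::field"
  assumes tr: "transcendental_over_prime_field l" shows "l \<noteq> 0"
proof -
  have "poly [:0,1:] l \<noteq> 0"
    by (rule transc[OF tr]) (auto simp: coeff_pCons split: nat.splits)
  then show ?thesis by simp
qed

inductive_set gen :: "'a::field \<Rightarrow> 'a set" for l where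
  g1: "inverse l \<in> gen l"
| g2: "of_int (b::int) \<noteq> (0::'a) \<Longrightarrow> inverse (of_int b) \<in> gen l"
| g0: "0 \<in> gen l"
| ga: "x \<in> gen l \<Longrightarrow> y \<in> gen l \<Longrightarrow> x + y \<in> gen l"
| gm: "x \<in> gen l \<Longrightarrow> y \<in> gen l \<Longrightarrow> x * y \<in> gen l"
| gn: "x \<in> gen l \<Longrightarrow> - x \<in> gen l"

lemma gen_form:
  fixes l :: "'a::field"
  assumes l0: "l \<noteq> 0" and x: "x \<in> gen l"
  shows "\<exists>b p d. of_int b \<noteq> (0::'a) \<and> (\<forall>i. coeff p i \<in> \<int>) \<and> degree p \<le> d \<and> x * of_int b * l^d = poly p l"
  using x
proof induction
  case g1
  show ?case by (rule exI[of _ 1], rule exI[of _ 1], rule exI[of _ 1]) (simp add: l0 coeff_1)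
next
  case (g2 b)
  then show ?case by (intro exI[of _ b] exI[of _ 1] exI[of _ 0]) (simp add: coeff_1)
next
  case g0
  show ?case by (intro exI[of _ 1] exI[of _ 0] exI[of _ 0]) simp
next
  case (ga x y)
  then obtain b p d c q e where h: "of_int b \<noteq> (0::'a)" "\<forall>i. coeff p i \<in> \<int>" "degree p \<le> d" "x * of_int b * l^d = poly p l"
    "of_int c \<noteq> (0::'a)" "\<forall>i. coeff q i \<in> \<int>" "degree q \<le> e" "y * of_int c * l^e = poly q l" by blast
  define r where "r = smult (of_int c) (p * monom 1 e) + smult (of_int b) (q * monom 1 d)"
  have "\<forall>i. coeff (p * monom 1 e) i \<in> \<int>" "\<forall>i. coeff (q * monom 1 d) i \<in> \<int>"
    by (rule Ints_coeff_mult, simp add: h, simp)+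
  then have c1: "\<forall>i. coeff r i \<in> \<int>" by (simp add: r_def)
  have "degree r \<le> d + e" unfolding r_def
    by (intro degree_add_le order.trans[OF degree_smult_le] order.trans[OF degree_mult_le])
       (auto simp: degree_monom_eq h add_mono)
  moreover have "(x + y) * of_int (b*c) * l^(d+e) = poly r l"
    unfolding r_def using h(4,8)[symmetric] by (simp add: poly_monom algebra_simps power_add)
  ultimately show ?case using h c1 by (intro exI[of _ "b*c"] exI[of _ r] exI[of _ "d+e"]) auto
next
  case (gm x y)
  then obtain b p d c q e where h: "of_int b \<noteq> (0::'a)" "\<forall>i. coeff p i \<in> \<int>" "degree p \<le> d" "x * of_int b * l^d = poly p l"
    "of_int c \<noteq> (0::'a)" "\<forall>i. coeff q i \<in> \<int>" "degree q \<le> e" "y * of_int c * l^e = poly q l" by blast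
  have c1: "\<forall>i. coeff (p*q) i \<in> \<int>" by (rule Ints_coeff_mult) (simp_all add: h)
  have "degree (p*q) \<le> d + e" by (rule order.trans[OF degree_mult_le]) (simp add: h add_mono)
  moreover have "(x * y) * of_int (b*c) * l^(d+e) = poly (p*q) l"
    using h(4,8)[symmetric] by (simp add: algebra_simps power_add)
  ultimately show ?case using h c1 by (intro exI[of _ "b*c"] exI[of _ "p*q"] exI[of _ "d+e"]) auto
next
  case (gn x)
  then obtain b p d where h: "of_int b \<noteq> (0::'a)" "\<forall>i. coeff p i \<in> \<int>" "degree p \<le> d" "x * of_int b * l^d = poly p l" by blast
  then show ?case by (intro exI[of _ b] exI[of _ "-p"] exI[of _ d]) auto
qed

lemma l_notin_gen:
  fixes l :: "'a::field"
  assumes tr: "transcendental_over_prime_field l"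
  shows "l \<notin> gen l"
proof
  assume "l \<in> gen l"
  from gen_form[OF transc_nz[OF tr] this] obtain b p d where
    h: "of_int b \<noteq> (0::'a)" "\<forall>i. coeff p i \<in> \<int>" "degree p \<le> d" "l * of_int b * l^d = poly p l" by blast
  define r where "r = monom (of_int b) (Suc d) - p"
  have "coeff r (Suc d) = of_int b" using h(3) by (simp add: r_def coeff_eq_0)
  then have "r \<noteq> 0" using h(1) by auto
  moreover have "\<forall>i. coeff r i \<in> \<int>" using h(2) by (simp add: r_def)
  moreover have "poly r l = 0" using h(4) by (simp add: r_def poly_monom algebra_simps)
  ultimately show False using transc[OF tr] by blast
qed


definition sr :: "'a::field set \<Rightarrow> bool" where
  "sr R \<longleftrightarrow> 0 \<in> R \<and> 1 \<in> R \<and> (\<forall>x\<in>R. \<forall>y\<in>R. x + y \<in> R \<and> x * y \<in> R) \<and> (\<forall>x\<in>R. - x \<in> R)"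

lemma sr_0: "sr R \<Longrightarrow> 0 \<in> R" and sr_1: "sr R \<Longrightarrow> 1 \<in> R"
  and sr_add: "sr R \<Longrightarrow> x \<in> R \<Longrightarrow> y \<in> R \<Longrightarrow> x + y \<in> R"
  and sr_mult: "sr R \<Longrightarrow> x \<in> R \<Longrightarrow> y \<in> R \<Longrightarrow> x * y \<in> R"
  and sr_neg: "sr R \<Longrightarrow> x \<in> R \<Longrightarrow> - x \<in> R"
  by (auto simp: sr_def)

lemma sr_diff: "sr R \<Longrightarrow> x \<in> R \<Longrightarrow> y \<in> R \<Longrightarrow> x - y \<in> R"
  using sr_add[of R x "-y"] sr_neg[of R y] by simp

lemma sr_sum: "sr R \<Longrightarrow> (\<And>x. x \<in> A \<Longrightarrow> f x \<in> R) \<Longrightarrow> sum f A \<in> R"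
  by (induction A rule: infinite_finite_induct) (auto intro: sr_0 sr_add)

lemma sr_prod: "sr R \<Longrightarrow> (\<And>x. x \<in> A \<Longrightarrow> f x \<in> R) \<Longrightarrow> prod f A \<in> R"
  by (induction A rule: infinite_finite_induct) (auto intro: sr_1 sr_mult)

lemma sr_power: "sr R \<Longrightarrow> x \<in> R \<Longrightarrow> x ^ n \<in> R"
  by (induction n) (auto intro: sr_1 sr_mult)

lemma sr_of_nat: "sr R \<Longrightarrow> of_nat n \<in> R"
  by (induction n) (auto intro: sr_0 sr_1 sr_add)

lemma sr_gen: "sr (gen l)"
proof -
  have "1 \<in> gen l" using gen.g2[of 1 l] by simp
  then show ?thesis unfolding sr_def by (auto intro: gen.intros)
qed

definition maxr :: "'a::field \<Rightarrow> 'a set \<Rightarrow> bool" where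
  "maxr l R \<longleftrightarrow> sr R \<and> gen l \<subseteq> R \<and> l \<notin> R \<and> (\<forall>S. sr S \<and> R \<subseteq> S \<and> l \<notin> S \<longrightarrow> S = R)"

lemma exists_maxr:
  fixes l :: "'a::field"
  assumes tr: "transcendental_over_prime_field l"
  shows "\<exists>R. maxr l R"
proof -
  define A where "A = {R. sr R \<and> gen l \<subseteq> R \<and> l \<notin> R}"
  have "A \<noteq> {}" using sr_gen l_notin_gen[OF tr] unfolding A_def by blast
  moreover have "\<Union>C \<in> A" if C: "C \<noteq> {}" "subset.chain A C" for C
  proof -
    have CA: "C \<subseteq> A" and ch: "\<And>X Y. X \<in> C \<Longrightarrow> Y \<in> C \<Longrightarrow> X \<subseteq> Y \<or> Y \<subseteq> X"
      using C(2) unfolding subset.chain_def by auto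
    have srC: "\<And>X. X \<in> C \<Longrightarrow> sr X" using CA unfolding A_def by auto
    have "sr (\<Union>C)" unfolding sr_def
    proof (intro conjI ballI)
      show "0 \<in> \<Union>C" "1 \<in> \<Union>C" using C(1) srC sr_0 sr_1 by blast+
    next
      fix x y assume "x \<in> \<Union>C" "y \<in> \<Union>C"
      then obtain X Y where XY: "X \<in> C" "Y \<in> C" "x \<in> X" "y \<in> Y" by blast
      then obtain Z where Z: "Z \<in> C" "x \<in> Z" "y \<in> Z" using ch[OF XY(1,2)] by blast
      then have "sr Z" using srC by blast
      then have "x + y \<in> Z" "x * y \<in> Z" using Z by (simp_all add: sr_add sr_mult)
      then show "x + y \<in> \<Union>C" "x * y \<in> \<Union>C" using Z by blast+
    next
      fix x assume "x \<in> \<Union>C" then show "- x \<in> \<Union>C" using srC sr_neg by blast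
    qed
    moreover have "gen l \<subseteq> \<Union>C" using C(1) CA unfolding A_def by blast
    moreover have "l \<notin> \<Union>C" using CA unfolding A_def by blast
    ultimately show ?thesis unfolding A_def by blast
  qed
  ultimately obtain M where "M \<in> A" "\<forall>X\<in>A. M \<subseteq> X \<longrightarrow> X = M"
    using subset_Zorn_nonempty[of A] by blast
  then show ?thesis unfolding maxr_def A_def by blast
qed

definition Rx :: "'a::field set \<Rightarrow> 'a \<Rightarrow> 'a set" where
  "Rx R x = {poly p x | p. \<forall>i. coeff p i \<in> R}"

lemma sr_Rx: assumes "sr R" shows "sr (Rx R x)"
  unfolding sr_def Rx_def
proof (intro conjI ballI)
  show "0 \<in> {poly p x |p. \<forall>i. coeff p i \<in> R}" using assms sr_0 by (intro CollectI exI[of _ 0]) auto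
  show "1 \<in> {poly p x |p. \<forall>i. coeff p i \<in> R}" using assms sr_0 sr_1 by (intro CollectI exI[of _ 1]) (auto simp: coeff_1)
next
  fix a b assume "a \<in> {poly p x |p. \<forall>i. coeff p i \<in> R}" "b \<in> {poly p x |p. \<forall>i. coeff p i \<in> R}"
  then obtain p q where pq: "a = poly p x" "b = poly q x" "\<forall>i. coeff p i \<in> R" "\<forall>i. coeff q i \<in> R" by blast
  have c1: "\<forall>i. coeff (p + q) i \<in> R" using pq assms by (auto intro: sr_add)
  have c2: "\<forall>i. coeff (p * q) i \<in> R" using pq assms by (auto simp: coeff_mult intro!: sr_sum sr_mult)
  have "a + b = poly (p+q) x" "a*b = poly (p*q) x" using pq by simp_all
  then show "a + b \<in> {poly p x |p. \<forall>i. coeff p i \<in> R}" "a * b \<in> {poly p x |p. \<forall>i. coeff p i \<in> R}"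
    using c1 c2 by blast+
next
  fix a assume "a \<in> {poly p x |p. \<forall>i. coeff p i \<in> R}"
  then obtain p where p: "a = poly p x" "\<forall>i. coeff p i \<in> R" by blast
  then have "\<forall>i. coeff (- p) i \<in> R" using assms by (auto intro: sr_neg)
  then show "- a \<in> {poly p x |p. \<forall>i. coeff p i \<in> R}" using p by (intro CollectI exI[of _ "-p"]) auto
qed

lemma R_sub_Rx: assumes "sr R" shows "R \<subseteq> Rx R x"
proof
  fix r assume r: "r \<in> R"
  have "\<forall>i. coeff [:r:] i \<in> R" using r sr_0[OF assms] by (auto simp: coeff_pCons split: nat.splits)
  then show "r \<in> Rx R x" unfolding Rx_def by (intro CollectI exI[of _ "[:r:]"]) simp
qed

lemma x_in_Rx: assumes "sr R" shows "x \<in> Rx R x"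
proof -
  have "\<forall>i. coeff [:0,1:] i \<in> R" using sr_0[OF assms] sr_1[OF assms] by (auto simp: coeff_pCons split: nat.splits)
  then show ?thesis unfolding Rx_def by (intro CollectI exI[of _ "[:0,1:]"]) auto
qed

lemma maxr_Rx: assumes "maxr l R" "x \<notin> R" shows "l \<in> Rx R x"
proof (rule ccontr)
  assume "l \<notin> Rx R x"
  moreover have "sr (Rx R x)" "R \<subseteq> Rx R x" using assms sr_Rx R_sub_Rx unfolding maxr_def by blast+
  ultimately have "Rx R x = R" using assms(1) unfolding maxr_def by blast
  then show False using x_in_Rx assms unfolding maxr_def by blast
qed


lemma maxr_mu: "maxr l R \<Longrightarrow> inverse l \<in> R"
  unfolding maxr_def using gen.g1 by blast

lemma one_minus_pow:
  assumes "sr R" "r \<in> R" "mu \<in> R"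
  shows "\<exists>t\<in>R. (1 - mu * r) ^ n = 1 - mu * t"
proof (induction n)
  case 0 show ?case using sr_0[OF assms(1)] by (intro bexI[of _ 0]) auto
next
  case (Suc n)
  then obtain t where t: "t \<in> R" "(1 - mu * r) ^ n = 1 - mu * t" by blast
  have "(1 - mu * r) ^ Suc n = (1 - mu * t) * (1 - mu * r)" using t(2) by (simp add: mult.commute)
  also have "\<dots> = 1 - mu * (t + r - mu * t * r)" by (simp add: algebra_simps)
  finally have "(1 - mu * r) ^ Suc n = 1 - mu * (t + r - mu * t * r)" .
  moreover have "t + r - mu * t * r \<in> R" using assms t by (intro sr_diff sr_add sr_mult) auto
  ultimately show ?case by blast
qed

lemma inv1:
  assumes m: "maxr l R" and l0: "l \<noteq> 0" and r: "r \<in> R"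
  shows "1 - inverse l * r \<noteq> 0 \<and> inverse (1 - inverse l * r) \<in> R"
proof -
  have sr: "sr R" and lR: "l \<notin> R" using m unfolding maxr_def by auto
  have mu: "inverse l \<in> R" using maxr_mu[OF m] .
  define a where "a = 1 - inverse l * r"
  have a0: "a \<noteq> 0"
  proof
    assume "a = 0"
    then have "r = l" using l0 by (simp add: a_def field_simps)
    then show False using r lR by simp
  qed
  moreover have "inverse a \<in> R"
  proof (rule ccontr)
    assume "inverse a \<notin> R"
    then have "l \<in> Rx R (inverse a)" using maxr_Rx[OF m] by blast
    then obtain p where p: "l = poly p (inverse a)" "\<forall>i. coeff p i \<in> R" unfolding Rx_def by blast
    define N where "N = degree p"
    have "l * a ^ N = (\<Sum>i\<le>N. coeff p i * (inverse a ^ i * a ^ N))"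
      unfolding p(1) poly_altdef N_def by (simp add: sum_distrib_right mult.assoc)
    also have "\<dots> = (\<Sum>i\<le>N. coeff p i * a ^ (N - i))"
    proof (rule sum.cong[OF refl])
      fix i assume "i \<in> {..N}"
      then have "a ^ N = a ^ (N - i) * a ^ i" by (simp flip: power_add)
      then show "coeff p i * (inverse a ^ i * a ^ N) = coeff p i * a ^ (N - i)"
        using a0 by (simp add: power_inverse field_simps)
    qed
    moreover have aR: "a \<in> R" unfolding a_def using sr mu r by (intro sr_diff sr_1 sr_mult)
    ultimately have "l * a ^ N \<in> R" using p(2) sr by (auto intro!: sr_sum sr_mult sr_power)
    obtain t where t: "t \<in> R" "a ^ N = 1 - inverse l * t" using one_minus_pow[OF sr r mu] a_def by blast
    have "l * a ^ N = l - t" unfolding t(2) using l0 by (simp add: right_diff_distrib mult.assoc[symmetric])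
    with \<open>l * a ^ N \<in> R\<close> have "l - t \<in> R" by simp
    then have "(l - t) + t \<in> R" using t(1) sr sr_add by blast
    then show False using lR by simp
  qed
  ultimately show ?thesis unfolding a_def by blast
qed

definition II :: "'a::field \<Rightarrow> 'a set \<Rightarrow> 'a set" where
  "II l R = {inverse l * r | r. r \<in> R}"

definition rep :: "'a::field \<Rightarrow> 'a set \<Rightarrow> 'a \<Rightarrow> nat \<Rightarrow> bool" where
  "rep l R x n \<longleftrightarrow> (\<exists>p. (\<forall>i. coeff p i \<in> II l R) \<and> degree p \<le> n \<and> poly p x = 1)"

lemma II_0: "sr R \<Longrightarrow> 0 \<in> II l R"
  unfolding II_def using sr_0 by force
lemma II_add: assumes "sr R" "a \<in> II l R" "b \<in> II l R" shows "a + b \<in> II l R"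
proof -
  obtain r s where "r \<in> R" "s \<in> R" "a = inverse l * r" "b = inverse l * s" using assms unfolding II_def by blast
  then have "a + b = inverse l * (r + s)" "r + s \<in> R" using assms(1) by (auto simp: algebra_simps intro: sr_add)
  then show ?thesis unfolding II_def by blast
qed
lemma II_mult: assumes "sr R" "a \<in> II l R" "b \<in> R" shows "a * b \<in> II l R"
proof -
  obtain r where "r \<in> R" "a = inverse l * r" using assms unfolding II_def by blast
  then have "a * b = inverse l * (r * b)" "r * b \<in> R" using assms by (auto simp: algebra_simps intro: sr_mult)
  then show ?thesis unfolding II_def by blast
qed
lemma II_sub: "sr R \<Longrightarrow> inverse l \<in> R \<Longrightarrow> II l R \<subseteq> R"
  unfolding II_def by (auto intro: sr_mult)
lemma II_sum: "sr R \<Longrightarrow> (\<And>x. x \<in> A \<Longrightarrow> f x \<in> II l R) \<Longrightarrow> sum f A \<in> II l R"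
  by (induction A rule: infinite_finite_induct) (auto intro: II_0 II_add)

lemma rep0:
  assumes m: "maxr l R" and l0: "l \<noteq> 0" and "rep l R x 0" shows False
proof -
  obtain p where p: "\<forall>i. coeff p i \<in> II l R" "degree p \<le> 0" "poly p x = 1" using assms(3) unfolding rep_def by blast
  have "p = [:coeff p 0:]" using p(2) degree_0_id[of p] by auto
  then have "coeff p 0 = 1" using p(3) by (metis poly_pCons mult_zero_right poly_0 add.right_neutral)
  moreover have "coeff p 0 \<in> II l R" using p(1) by blast
  ultimately obtain r where "r \<in> R" "inverse l * r = 1" unfolding II_def by auto
  then have "r = l" using l0 by (simp add: field_simps)
  then show False using \<open>r \<in> R\<close> m unfolding maxr_def by simp
qed

lemma poly_sum_le:
  fixes q :: "'a::field poly"
  assumes "degree q \<le> m" shows "poly q y = (\<Sum>j\<le>m. coeff q j * y ^ j)"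
proof -
  have "poly q y = poly (\<Sum>i\<le>m. monom (coeff q i) i) y" using poly_as_sum_of_monoms'[OF assms] by simp
  also have "\<dots> = (\<Sum>j\<le>m. coeff q j * y ^ j)" by (simp add: poly_sum poly_monom)
  finally show ?thesis .
qed

lemma reduce:
  assumes m: "maxr l R" and l0: "l \<noteq> 0" and x0: "x \<noteq> 0"
    and rx: "rep l R x n" and ry: "rep l R (inverse x) k" and k1: "1 \<le> k" and kn: "k \<le> n"
  shows "rep l R x (n - 1)"
proof -
  have sr: "sr R" using m unfolding maxr_def by auto
  have mu: "inverse l \<in> R" using maxr_mu[OF m] .
  obtain p where p: "\<forall>i. coeff p i \<in> II l R" "degree p \<le> n" "poly p x = 1" using rx unfolding rep_def by blast
  obtain q where q: "\<forall>i. coeff q i \<in> II l R" "degree q \<le> k" "poly q (inverse x) = 1" using ry unfolding rep_def by blast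
  obtain r0 where r0: "r0 \<in> R" "coeff q 0 = inverse l * r0" using q(1) unfolding II_def by force
  define a where "a = 1 - coeff q 0"
  have a: "a \<noteq> 0" "inverse a \<in> R" using inv1[OF m l0 r0(1)] r0(2) a_def by auto
  have "1 = (\<Sum>j\<le>k. coeff q j * inverse x ^ j)" using q(3) poly_sum_le[OF q(2)] by simp
  also have "{..k} = insert 0 {1..k}" by auto
  finally have "1 = coeff q 0 + (\<Sum>j\<in>{1..k}. coeff q j * inverse x ^ j)" by simp
  then have s1: "(\<Sum>j\<in>{1..k}. coeff q j * inverse x ^ j) = a" unfolding a_def by (metis add_diff_cancel_left')
  define rr where "rr = (\<Sum>j\<in>{1..k}. monom (coeff q j * inverse a) (n - j))"
  have "poly rr x = (\<Sum>j\<in>{1..k}. coeff q j * inverse a * x ^ (n - j))"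
    unfolding rr_def by (simp add: poly_sum poly_monom)
  also have "\<dots> = (\<Sum>j\<in>{1..k}. (coeff q j * inverse x ^ j) * (inverse a * x ^ n))"
  proof (rule sum.cong[OF refl])
    fix j assume "j \<in> {1..k}"
    then have "x ^ n = x ^ (n - j) * x ^ j" using kn by (simp flip: power_add)
    then show "coeff q j * inverse a * x ^ (n - j) = (coeff q j * inverse x ^ j) * (inverse a * x ^ n)"
      using x0 by (simp add: power_inverse field_simps)
  qed
  also have "\<dots> = a * (inverse a * x ^ n)" by (simp only: sum_distrib_right[symmetric] s1)
  finally have prr: "poly rr x = x ^ n" using a(1) by simp
  have crr: "coeff rr i = (\<Sum>j\<in>{1..k}. if n - j = i then coeff q j * inverse a else 0)" for i
    unfolding rr_def by (simp add: coeff_sum)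
  have crrI: "coeff rr i \<in> II l R" for i
    unfolding crr using q(1) a(2) sr by (auto intro!: II_sum II_mult II_0)
  have crr0: "coeff rr i = 0" if "i \<ge> n" for i
    unfolding crr using that k1 kn by (intro sum.neutral) auto
  define p' where "p' = p + smult (coeff p n) (rr - monom 1 n)"
  have cp': "coeff p' i = coeff p i + coeff p n * (coeff rr i - (if n = i then 1 else 0))" for i
    by (simp add: p'_def)
  have "\<forall>i. coeff p' i \<in> II l R"
  proof
    fix i
    have "coeff rr i - (if n = i then 1 else 0) \<in> R"
      using crrI[of i] II_sub[OF sr mu] sr by (auto intro: sr_diff sr_0 sr_1)
    then show "coeff p' i \<in> II l R" unfolding cp' using p(1) sr by (intro II_add II_mult) auto
  qed
  moreover have "degree p' \<le> n - 1"
  proof (rule degree_le, intro allI impI)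
    fix i assume "n - 1 < i"
    then have "n \<le> i" by simp
    show "coeff p' i = 0"
    proof (cases "i = n")
      case True then show ?thesis unfolding cp' using crr0 by simp
    next
      case False
      then have "coeff p i = 0" using p(2) \<open>n \<le> i\<close> by (simp add: coeff_eq_0)
      then show ?thesis unfolding cp' using crr0 \<open>n \<le> i\<close> False by simp
    qed
  qed
  moreover have "poly p' x = 1" unfolding p'_def using p(3) prr by (simp add: poly_monom)
  ultimately show ?thesis unfolding rep_def by blast
qed

lemma valuation:
  assumes m: "maxr l R" and l0: "l \<noteq> 0"
  shows "x \<in> R \<or> inverse x \<in> R"
proof (rule ccontr)
  assume "\<not> (x \<in> R \<or> inverse x \<in> R)"
  then have xR: "x \<notin> R" and iR: "inverse x \<notin> R" by auto
  have sr: "sr R" using m unfolding maxr_def by auto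
  have x0: "x \<noteq> 0" using xR sr_0[OF sr] by auto
  have ex: "\<exists>n. rep l R y n" if yR: "y \<notin> R" for y
  proof -
    obtain p where p: "l = poly p y" "\<forall>i. coeff p i \<in> R" using maxr_Rx[OF m yR] unfolding Rx_def by blast
    have "\<forall>i. coeff (smult (inverse l) p) i \<in> II l R" using p(2) unfolding II_def by auto
    moreover have "poly (smult (inverse l) p) y = 1" using p(1) l0 by simp
    ultimately show ?thesis unfolding rep_def by blast
  qed
  define n0 where "n0 = (LEAST n. rep l R x n)"
  define k0 where "k0 = (LEAST n. rep l R (inverse x) n)"
  have rn: "rep l R x n0" unfolding n0_def using ex[OF xR] by (metis LeastI)
  have rk: "rep l R (inverse x) k0" unfolding k0_def using ex[OF iR] by (metis LeastI)
  have n1: "n0 \<ge> 1" using rep0[OF m l0] rn by (cases n0) auto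
  have k1: "k0 \<ge> 1" using rep0[OF m l0] rk by (cases k0) auto
  show False
  proof (cases "k0 \<le> n0")
    case True
    then have "rep l R x (n0 - 1)" using reduce[OF m l0 x0 rn rk k1] by blast
    then have "n0 \<le> n0 - 1" unfolding n0_def by (rule Least_le)
    then show False using n1 by simp
  next
    case False
    have "rep l R (inverse (inverse x)) n0" using rn by simp
    then have "rep l R (inverse x) (k0 - 1)" using reduce[OF m l0 _ rk _ n1] False x0 by simp
    then have "k0 \<le> k0 - 1" unfolding k0_def by (rule Least_le)
    then show False using k1 by simp
  qed
qed


locale vr =
  fixes l :: "'a::field" and R :: "'a set"
  assumes m: "maxr l R" and l0: "l \<noteq> 0"
begin

lemma srR: "sr R" and lR: "l \<notin> R" and genR: "gen l \<subseteq> R" using m unfolding maxr_def by auto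
lemma mu: "inverse l \<in> R" using maxr_mu[OF m] .
lemma val: "x \<in> R \<or> inverse x \<in> R" using valuation[OF m l0] .

definition U where "U x \<longleftrightarrow> x \<in> R \<and> x \<noteq> 0 \<and> inverse x \<in> R"
definition N where "N x \<longleftrightarrow> x \<in> R \<and> \<not> U x"

lemma UR: "U x \<Longrightarrow> x \<in> R" and NR: "N x \<Longrightarrow> x \<in> R" unfolding U_def N_def by auto
lemma U_inv: "U x \<Longrightarrow> inverse x \<in> R" and U_nz: "U x \<Longrightarrow> x \<noteq> 0" unfolding U_def by auto
lemma UN: "x \<in> R \<Longrightarrow> U x \<or> N x" unfolding N_def by auto
lemma N_not_U: "N x \<Longrightarrow> \<not> U x" unfolding N_def by auto

lemma U_1: "U 1" unfolding U_def using sr_1[OF srR] by simp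
lemma N_0: "N 0" unfolding N_def U_def using sr_0[OF srR] by simp

lemma N_add: assumes a: "N a" and b: "N b" shows "N (a + b)"
proof -
  have ab: "a + b \<in> R" using NR[OF a] NR[OF b] srR sr_add by blast
  show ?thesis
  proof (cases "a = 0 \<or> b = 0")
    case True then show ?thesis using a b by auto
  next
    case False
    then have a0: "a \<noteq> 0" and b0: "b \<noteq> 0" by auto
    show ?thesis unfolding N_def
    proof (intro conjI ab notI)
      assume u: "U (a + b)"
      then have s0: "a + b \<noteq> 0" and si: "inverse (a + b) \<in> R" unfolding U_def by auto
      from val[of "a / b"] show False
      proof
        assume "a / b \<in> R"
        then have "(1 + a / b) * inverse (a + b) \<in> R" using si srR by (intro sr_mult sr_add sr_1) auto
        moreover have "(1 + a / b) * inverse (a + b) = inverse b" using b0 s0 by (simp add: field_simps)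
        ultimately have "U b" unfolding U_def using NR[OF b] b0 by auto
        then show False using b unfolding N_def by auto
      next
        assume "inverse (a / b) \<in> R"
        then have "(1 + b / a) * inverse (a + b) \<in> R" using si srR by (intro sr_mult sr_add sr_1) auto
        moreover have "(1 + b / a) * inverse (a + b) = inverse a" using a0 s0 by (simp add: field_simps)
        ultimately have "U a" unfolding U_def using NR[OF a] a0 by auto
        then show False using a unfolding N_def by auto
      qed
    qed
  qed
qed

lemma N_mult: assumes a: "N a" and b: "b \<in> R" shows "N (a * b)"
proof -
  have ab: "a * b \<in> R" using NR[OF a] b srR sr_mult by blast
  show ?thesis unfolding N_def
  proof (intro conjI ab notI)
    assume "U (a * b)"
    then have "a * b \<noteq> 0" "inverse (a * b) \<in> R" unfolding U_def by auto
    then have "b * inverse (a * b) \<in> R" using b srR sr_mult by blast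
    moreover have "b * inverse (a * b) = inverse a" using \<open>a * b \<noteq> 0\<close> by (simp add: field_simps)
    ultimately have "inverse a \<in> R" by metis
    then have "U a" unfolding U_def using NR[OF a] \<open>a * b \<noteq> 0\<close> by auto
    then show False using a unfolding N_def by auto
  qed
qed

lemma N_mult': "N a \<Longrightarrow> b \<in> R \<Longrightarrow> N (b * a)"
  using N_mult by (simp add: mult.commute)

lemma N_neg: "N a \<Longrightarrow> N (- a)"
  using N_mult[of a "-1"] sr_neg[OF srR sr_1[OF srR]] by simp

lemma N_diff: "N a \<Longrightarrow> N b \<Longrightarrow> N (a - b)"
  using N_add[of a "-b"] N_neg[of b] by simp

lemma U_mult: "U a \<Longrightarrow> U b \<Longrightarrow> U (a * b)"
  unfolding U_def using srR sr_mult by auto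

lemma U_add_N: assumes a: "U a" and b: "N b" shows "U (a + b)"
proof (rule ccontr)
  assume "\<not> U (a + b)"
  moreover have "a + b \<in> R" using UR[OF a] NR[OF b] srR sr_add by blast
  ultimately have "N (a + b)" unfolding N_def by auto
  then have "N ((a + b) - b)" using N_diff b by blast
  then show False using a unfolding N_def by simp
qed

lemma U_power: "U a \<Longrightarrow> U (a ^ n)"
  by (induction n) (auto intro: U_1 U_mult)

lemma N_power: assumes "N a" "n \<ge> 1" shows "N (a ^ n)"
proof -
  have "a ^ n = a * a ^ (n - 1)" using assms(2) by (cases n) auto
  then show ?thesis using N_mult[OF assms(1) sr_power[OF srR NR[OF assms(1)]]] by simp
qed

lemma U_prod: "(\<And>i. i \<in> A \<Longrightarrow> U (f i)) \<Longrightarrow> U (prod f A)"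
  by (induction A rule: infinite_finite_induct) (auto intro: U_1 U_mult)

lemma notR_N: assumes "x \<notin> R" shows "N (inverse x)" "x \<noteq> 0"
proof -
  show x0: "x \<noteq> 0" using assms sr_0[OF srR] by auto
  have "inverse x \<in> R" using val assms by blast
  then show "N (inverse x)" unfolding N_def U_def using assms by auto
qed

lemma mu_N: "N (inverse l)"
  using mu lR unfolding N_def U_def by auto

lemma U_int: assumes "of_int b \<noteq> (0::'a)" shows "U (of_int b)"
proof -
  have "of_int b \<in> R"
  proof (cases "b \<ge> 0")
    case True then have "of_int b = (of_nat (nat b) :: 'a)" by simp
    then show ?thesis using sr_of_nat[OF srR] by simp
  next
    case False then have "of_int b = - (of_nat (nat (- b)) :: 'a)" by simp
    then show ?thesis using sr_of_nat[OF srR] sr_neg[OF srR] by simp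
  qed
  moreover have "inverse (of_int b) \<in> R" using gen.g2[OF assms] genR by blast
  ultimately show ?thesis unfolding U_def using assms by auto
qed

lemma U_nat: assumes "of_nat k \<noteq> (0::'a)" shows "U (of_nat k)"
  using U_int[of "int k"] assms by simp

lemma lpow: assumes "k \<ge> 1" shows "l ^ k \<notin> R"
proof
  assume "l ^ k \<in> R"
  then have "l ^ k * inverse l ^ (k - 1) \<in> R" using sr_mult[OF srR _ sr_power[OF srR mu]] by blast
  moreover have "l ^ k * inverse l ^ (k - 1) = l"
  proof -
    have "l ^ k = l * l ^ (k - 1)" using assms by (cases k) auto
    then show ?thesis using l0 by (simp add: power_inverse field_simps)
  qed
  ultimately show False using lR by simp
qed

lemma final: assumes "U C" "k \<ge> 1" "mm > 0" "(l ^ k * C) ^ mm = 1" shows False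
proof -
  have "l ^ (k * mm) * C ^ mm = 1" using assms(4) by (simp add: power_mult_distrib power_mult)
  moreover have "C ^ mm \<noteq> 0" using U_nz[OF assms(1)] by simp
  ultimately have "l ^ (k * mm) = inverse (C ^ mm)" by (simp add: field_simps)
  moreover have "inverse (C ^ mm) \<in> R" using U_inv[OF U_power[OF assms(1)]] .
  moreover have "k * mm \<ge> 1" using assms(2,3) by simp
  ultimately show False using lpow by metis
qed

lemma esc_gen:
  assumes z: "z \<notin> R" and g: "U g" and f: "fz = l * z ^ Suc e * g"
  shows "fz \<notin> R \<and> (\<exists>t. N t \<and> inverse fz = inverse z * t)"
proof -
  have z0: "z \<noteq> 0" and w: "N (inverse z)" using notR_N[OF z] by auto
  define t where "t = inverse l * (inverse z ^ e * inverse g)"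
  have t: "N t" unfolding t_def using mu_N srR NR[OF w] U_inv[OF g]
    by (intro N_mult sr_mult sr_power) auto
  have g0: "g \<noteq> 0" using U_nz[OF g] .
  have it: "inverse fz = inverse z * t" unfolding f t_def using z0 g0 l0
    by (simp add: power_inverse field_simps)
  have "fz \<notin> R"
  proof
    assume fR: "fz \<in> R"
    have "fz \<noteq> 0" unfolding f using z0 g0 l0 by simp
    have "N (inverse z * t)" using N_mult[OF w NR[OF t]] .
    moreover have "U (inverse fz)"
    proof -
      have "inverse fz \<in> R" using it NR[OF \<open>N (inverse z * t)\<close>] by simp
      moreover have "inverse fz \<noteq> 0" using \<open>fz \<noteq> 0\<close> by simp
      moreover have "inverse (inverse fz) \<in> R" using fR by simp
      ultimately show ?thesis unfolding U_def by blast
    qed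
    ultimately show False using it N_not_U by simp
  qed
  then show ?thesis using t it by blast
qed

lemma escape:
  assumes esc: "\<And>z. z \<notin> R \<Longrightarrow> f z \<notin> R \<and> (\<exists>t. N t \<and> inverse (f z) = inverse z * t)"
    and per: "(f ^^ n) z0 = z0" and n1: "n \<ge> 1"
  shows "z0 \<in> R"
proof (rule ccontr)
  assume z0R: "z0 \<notin> R"
  have "(f ^^ Suc k) z0 \<notin> R \<and> (\<exists>T. N T \<and> inverse ((f ^^ Suc k) z0) = inverse z0 * T)" for k
  proof (induction k)
    case 0 then show ?case using esc[OF z0R] by simp
  next
    case (Suc k)
    then obtain T where T: "(f ^^ Suc k) z0 \<notin> R" "N T" "inverse ((f ^^ Suc k) z0) = inverse z0 * T" by blast
    obtain t where t: "f ((f ^^ Suc k) z0) \<notin> R" "N t" "inverse (f ((f ^^ Suc k) z0)) = inverse ((f ^^ Suc k) z0) * t"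
      using esc[OF T(1)] by blast
    have "N (T * t)" using N_mult[OF T(2) NR[OF t(2)]] .
    moreover have "inverse ((f ^^ Suc (Suc k)) z0) = inverse z0 * (T * t)" using t(3) T(3) by (simp add: mult.assoc)
    ultimately show ?case using t(1) by auto
  qed
  from this[of "n - 1"] n1 per obtain T where "N T" "inverse z0 = inverse z0 * T" by auto
  moreover have "inverse z0 \<noteq> 0" using notR_N[OF z0R] by simp
  ultimately have "T = 1" by simp
  then show False using \<open>N T\<close> U_1 N_not_U by simp
qed

lemma orbit_per:
  assumes "(f ^^ n) z0 = z0" shows "(f ^^ n) ((f ^^ k) z0) = (f ^^ k) z0"
proof -
  have "(f ^^ n) ((f ^^ k) z0) = (f ^^ (n + k)) z0" by (simp add: funpow_add)
  also have "\<dots> = (f ^^ k) ((f ^^ n) z0)" by (simp add: funpow_add add.commute)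
  finally show ?thesis using assms by simp
qed

lemma orbit_R:
  assumes esc: "\<And>z. z \<notin> R \<Longrightarrow> f z \<notin> R \<and> (\<exists>t. N t \<and> inverse (f z) = inverse z * t)"
    and per: "(f ^^ n) z0 = z0" and n1: "n \<ge> 1"
  shows "(f ^^ k) z0 \<in> R"
  using escape[OF esc orbit_per[OF per] n1] .

lemma main_simple:
  assumes esc: "\<And>z. z \<notin> R \<Longrightarrow> f z \<notin> R \<and> (\<exists>t. N t \<and> inverse (f z) = inverse z * t)"
    and stepB: "\<And>z. z \<in> R \<Longrightarrow> f z \<in> R \<Longrightarrow> U (D z * inverse l)"
    and per: "(f ^^ n) z0 = z0" and n1: "n \<ge> 1"
    and ru: "root_of_unity (\<Prod>i<n. D ((f ^^ i) z0))"
  shows False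
proof -
  have oR: "(f ^^ k) z0 \<in> R" for k
  proof (rule orbit_R[where f=f and n=n])
    show "\<And>z. z \<notin> R \<Longrightarrow> f z \<notin> R \<and> (\<exists>t. N t \<and> inverse (f z) = inverse z * t)" by (rule esc)
  qed (fact per, fact n1)
  have u: "U (D ((f ^^ i) z0) * inverse l)" for i
    using stepB[OF oR[of i]] oR[of "Suc i"] by simp
  have "(\<Prod>i<n. D ((f ^^ i) z0)) = (\<Prod>i<n. l * (D ((f ^^ i) z0) * inverse l))"
    using l0 by (intro prod.cong) auto
  also have "\<dots> = l ^ n * (\<Prod>i<n. D ((f ^^ i) z0) * inverse l)" by (simp add: prod.distrib)
  finally have e: "(\<Prod>i<n. D ((f ^^ i) z0)) = l ^ n * (\<Prod>i<n. D ((f ^^ i) z0) * inverse l)" .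
  from ru obtain mm where "mm > 0" "(\<Prod>i<n. D ((f ^^ i) z0)) ^ mm = 1" unfolding root_of_unity_def by blast
  then show False using final[OF U_prod[OF u] n1] e by simp
qed

lemma main_char3:
  assumes esc: "\<And>z. z \<notin> R \<Longrightarrow> f z \<notin> R \<and> (\<exists>t. N t \<and> inverse (f z) = inverse z * t)"
    and stepC: "\<And>z. z \<in> R \<Longrightarrow> f z \<in> R \<Longrightarrow> U (c z)"
    and fg: "\<And>z. f z = l * (z * g z)"
    and Dh: "\<And>z. D z = l * (h z * c z)"
    and hg: "\<And>z. h z ^ 2 = g z"
    and D0: "U (D 0 * inverse l)"
    and per: "(f ^^ n) z0 = z0" and n1: "n \<ge> 1"
    and ru: "root_of_unity (\<Prod>i<n. D ((f ^^ i) z0))"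
  shows False
proof -
  define z where "z = (\<lambda>i. (f ^^ i) z0)"
  define M where "M = (\<Prod>i<n. D (z i))"
  from ru obtain mm where mm: "mm > 0" "M ^ mm = 1" unfolding root_of_unity_def M_def z_def by blast
  show False
  proof (cases "z0 = 0")
    case True
    have "z i = 0" for i unfolding z_def using True by (induction i) (auto simp: fg)
    then have "M = D 0 ^ n" unfolding M_def by simp
    moreover have "l * (D 0 * inverse l) = D 0" using l0 by (simp add: field_simps)
    ultimately have "M = (l * (D 0 * inverse l)) ^ n" by metis
    then have "(l ^ n * (D 0 * inverse l) ^ n) ^ mm = 1" using mm by (simp add: power_mult_distrib)
    then show False using final[OF U_power[OF D0, of n] n1 mm(1)] by simp
  next
    case False
    have zs: "z (Suc i) = f (z i)" for i unfolding z_def by simp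
    have znz: "z i \<noteq> 0" if "i < n" for i
    proof
      assume "z i = 0"
      have "(f ^^ j) 0 = 0" for j by (induction j) (auto simp: fg)
      have "(f ^^ n) z0 = (f ^^ (n - i)) (z i)"
      proof -
        have "n = (n - i) + i" using that by simp
        then have "(f ^^ n) z0 = (f ^^ ((n - i) + i)) z0" by simp
        also have "\<dots> = (f ^^ (n - i)) ((f ^^ i) z0)" by (simp add: funpow_add)
        finally show ?thesis by (simp add: z_def)
      qed
      then show False using per False \<open>z i = 0\<close> \<open>\<And>j. (f ^^ j) 0 = 0\<close> by simp
    qed
    have zn: "z n = z 0" unfolding z_def using per by simp
    have "z 0 * (\<Prod>i<n. z (Suc i)) = (\<Prod>i<n. z i) * z n"
      using prod.lessThan_Suc_shift[of z n] prod.lessThan_Suc[of z n] by simp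
    then have "(\<Prod>i<n. z (Suc i)) = (\<Prod>i<n. z i)" using zn False unfolding z_def by simp
    also have "(\<Prod>i<n. z (Suc i)) = (\<Prod>i<n. l * (z i * g (z i)))" using zs fg by simp
    also have "\<dots> = l ^ n * (\<Prod>i<n. z i) * (\<Prod>i<n. g (z i))" by (simp add: prod.distrib)
    finally have "(l ^ n * (\<Prod>i<n. g (z i)) - 1) * (\<Prod>i<n. z i) = 0" by (simp add: algebra_simps)
    moreover have "(\<Prod>i<n. z i) \<noteq> 0" using znz by simp
    ultimately have lg: "l ^ n * (\<Prod>i<n. g (z i)) = 1" by simp
    have "M ^ 2 = (\<Prod>i<n. D (z i) ^ 2)" unfolding M_def by (simp add: prod_power_distrib)
    also have "\<dots> = (\<Prod>i<n. l * (l * g (z i)) * c (z i) ^ 2)"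
    proof (rule prod.cong[OF refl])
      fix i
      have "D (z i) ^ 2 = l * (l * h (z i) ^ 2) * c (z i) ^ 2" unfolding Dh by (simp add: power2_eq_square mult_ac)
      then show "D (z i) ^ 2 = l * (l * g (z i)) * c (z i) ^ 2" using hg by simp
    qed
    also have "\<dots> = l ^ n * (l ^ n * (\<Prod>i<n. g (z i))) * (\<Prod>i<n. c (z i) ^ 2)"
      by (simp add: prod.distrib)
    also have "\<dots> = l ^ n * (\<Prod>i<n. c (z i) ^ 2)" using lg by simp
    finally have M2: "M ^ 2 = l ^ n * (\<Prod>i<n. c (z i) ^ 2)" .
    have oR: "(f ^^ k) z0 \<in> R" for k
    proof (rule orbit_R[where f=f and n=n])
      show "\<And>z. z \<notin> R \<Longrightarrow> f z \<notin> R \<and> (\<exists>t. N t \<and> inverse (f z) = inverse z * t)" by (rule esc)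
    qed (fact per, fact n1)
    have "U (c (z i))" for i
      using stepC[OF oR[of i]] oR[of "Suc i"] unfolding z_def by simp
    then have UC: "U (\<Prod>i<n. c (z i) ^ 2)" by (intro U_prod U_power)
    have "(M ^ 2) ^ mm = 1" using mm by (simp flip: power_mult add: mult.commute power_mult)
    then show False using final[OF UC n1 mm(1)] M2 by simp
  qed
qed

end

lemma poly_iter_Suc: "poly_iter P (Suc k) = pcompose P (poly_iter P k)"
  unfolding poly_iter_def by simp

lemma poly_iter_eval: "poly (poly_iter P k) z = (poly P ^^ k) z"
  by (induction k) (simp_all add: poly_iter_Suc poly_pcompose, simp add: poly_iter_def)

lemma poly_iter_deriv:
  fixes P :: "'a::field poly"
  shows "poly (pderiv (poly_iter P k)) z = (\<Prod>i<k. poly (pderiv P) ((poly P ^^ i) z))"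
proof (induction k)
  case 0 then show ?case by (simp add: poly_iter_def pderiv_pCons)
next
  case (Suc k)
  then show ?case by (simp add: poly_iter_Suc pderiv_pcompose poly_pcompose poly_iter_eval mult.commute)
qed

context vr begin

lemma gN: assumes "z \<in> R" "U z" "g \<in> R" "fz = l * (z * g)" "fz \<in> R" shows "N g"
proof (rule ccontr)
  assume "\<not> N g"
  then have "U g" using UN[OF assms(3)] by auto
  then have u: "U (z * g)" using U_mult assms(2) by blast
  have "l = fz * inverse (z * g)" using assms(4) U_nz[OF u] by (simp add: field_simps)
  moreover have "fz * inverse (z * g) \<in> R" using assms(5) U_inv[OF u] srR sr_mult by blast
  ultimately show False using lR by simp
qed

lemma esc1:
  assumes z: "z \<notin> R" and q: "q \<ge> 1"
  shows "l * (z * (1 + z ^ q)) \<notin> R \<and> (\<exists>t. N t \<and> inverse (l * (z * (1 + z ^ q))) = inverse z * t)"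
proof (rule esc_gen[OF z])
  have z0: "z \<noteq> 0" and w: "N (inverse z)" using notR_N[OF z] by auto
  show "U (1 + inverse z ^ q)" using U_add_N[OF U_1 N_power[OF w q]] .
  have "z ^ q * inverse z ^ q = 1" using z0 by (simp add: power_inverse)
  then show "l * (z * (1 + z ^ q)) = l * z ^ Suc q * (1 + inverse z ^ q)"
    by (simp add: algebra_simps)
qed

lemma esc2:
  assumes z: "z \<notin> R" and q: "q \<ge> 1"
  shows "l * (z * (1 + z ^ q + z ^ (2 * q))) \<notin> R \<and>
    (\<exists>t. N t \<and> inverse (l * (z * (1 + z ^ q + z ^ (2 * q)))) = inverse z * t)"
proof (rule esc_gen[OF z])
  have z0: "z \<noteq> 0" and w: "N (inverse z)" using notR_N[OF z] by auto
  have q2: "2 * q \<ge> 1" using q by simp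
  show "U (1 + inverse z ^ q + inverse z ^ (2 * q))"
    using U_add_N[OF U_add_N[OF U_1 N_power[OF w q]] N_power[OF w q2]] .
  define a where "a = z ^ q"
  define b where "b = inverse z ^ q"
  have e1: "a * b = 1" using z0 unfolding a_def b_def by (simp add: power_inverse)
  have e2: "z ^ (2 * q) = a * a" unfolding a_def by (simp add: mult_2 power_add)
  have e3: "inverse z ^ (2 * q) = b * b" unfolding b_def by (simp add: mult_2 power_add)
  have e4: "z ^ Suc (2 * q) = z * (a * a)" using e2 by simp
  have "z * (a * a) * (1 + b + b * b) = z * (a * a + a * (a * b) + (a * b) * (a * b))"
    by (simp add: algebra_simps)
  also have "\<dots> = z * (1 + a + a * a)" unfolding e1 by (simp add: algebra_simps)
  finally have "z * (a * a) * (1 + b + b * b) = z * (1 + a + a * a)" .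
  then show "l * (z * (1 + z ^ q + z ^ (2 * q))) = l * z ^ Suc (2 * q) * (1 + inverse z ^ q + inverse z ^ (2 * q))"
    unfolding e2 e3 e4 a_def[symmetric] b_def[symmetric] by (metis mult.assoc)
qed

lemma stepB1:
  assumes z: "z \<in> R" and fz: "l * (z * (1 + z ^ q)) \<in> R" and q: "q \<ge> 1" and Uq: "U (of_nat q)"
  shows "U (1 + of_nat (q + 1) * z ^ q)"
proof (cases "U z")
  case False
  then have "N z" using UN[OF z] by auto
  then have "N (of_nat (q + 1) * z ^ q)" using N_mult'[OF N_power[OF _ q] sr_of_nat[OF srR]] by blast
  then show ?thesis using U_add_N[OF U_1] by blast
next
  case True
  have y: "U (z ^ q)" using U_power[OF True] .
  have "N (1 + z ^ q)" by (rule gN[OF z True _ refl fz]) (use srR UR[OF y] in \<open>auto intro: sr_add sr_1\<close>)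
  moreover have eq: "1 + of_nat (q + 1) * z ^ q = of_nat q * z ^ q + (1 + z ^ q)" by (simp add: algebra_simps)
  ultimately show ?thesis unfolding eq by (intro U_add_N[OF U_mult[OF Uq y]])
qed

lemma stepB2:
  assumes z: "z \<in> R" and fz: "l * (z * (1 + z ^ q + z ^ (2 * q))) \<in> R" and q: "q \<ge> 1" and Uq: "U (of_nat q)"
    and three: "(3::'a) \<noteq> 0"
  shows "U (1 + of_nat (q + 1) * z ^ q + of_nat (2 * q + 1) * z ^ (2 * q))"
proof (cases "U z")
  case False
  then have "N z" using UN[OF z] by auto
  have q2: "2 * q \<ge> 1" using q by simp
  have "N (of_nat (q + 1) * z ^ q)" using N_mult'[OF N_power[OF \<open>N z\<close> q] sr_of_nat[OF srR]] by blast
  moreover have "N (of_nat (2 * q + 1) * z ^ (2 * q))" using N_mult'[OF N_power[OF \<open>N z\<close> q2] sr_of_nat[OF srR]] by blast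
  ultimately show ?thesis using U_add_N[OF U_add_N[OF U_1]] by blast
next
  case True
  define y where "y = z ^ q"
  have y: "U y" using U_power[OF True] unfolding y_def by blast
  have z2: "z ^ (2 * q) = y ^ 2" unfolding y_def by (simp add: power_mult mult.commute)
  have yR: "y \<in> R" using UR[OF y] .
  have gR: "1 + y + y ^ 2 \<in> R" using srR yR by (intro sr_add sr_1 sr_power)
  have g: "N (1 + y + y ^ 2)" by (rule gN[OF z True gR _ ]) (use fz z2 y_def in auto)
  have u2: "U (1 + 2 * y)"
  proof (rule ccontr)
    assume "\<not> U (1 + 2 * y)"
    moreover have "1 + 2 * y \<in> R" using srR yR by (intro sr_add sr_1 sr_mult) (auto simp: sr_of_nat[OF srR, of 2, simplified])
    ultimately have "N (1 + 2 * y)" using UN by blast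
    moreover have "(4::'a) \<in> R" using sr_of_nat[OF srR, of 4] by simp
    ultimately have n1: "N (1 + 2 * y)" and four: "(4::'a) \<in> R" by auto
    have "N (4 * (1 + y + y ^ 2))" using N_mult'[OF g four] .
    moreover have "N ((1 + 2 * y) ^ 2)" using N_power[OF n1, of 2] by simp
    ultimately have nd: "N (4 * (1 + y + y ^ 2) - (1 + 2 * y) ^ 2)" by (rule N_diff)
    have e3: "4 * (1 + y + y ^ 2) - (1 + 2 * y) ^ 2 = (3 :: 'a)" by (simp add: algebra_simps power2_eq_square)
    have u3: "U (3 :: 'a)" using U_nat[of 3] three by simp
    from nd have "N (3::'a)" unfolding e3 .
    then show False using N_not_U u3 by blast
  qed
  have eq: "1 + of_nat (q + 1) * z ^ q + of_nat (2 * q + 1) * z ^ (2 * q) = (of_nat q * y * (1 + 2 * y)) + (1 + y + y ^ 2)"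
    unfolding z2 y_def[symmetric] by (simp add: algebra_simps power2_eq_square)
  show ?thesis unfolding eq by (rule U_add_N[OF U_mult[OF U_mult[OF Uq y] u2] g])
qed

end

context vr begin

lemma stepC:
  assumes z: "z \<in> R" and fz: "l * (z * (1 + z ^ q + z ^ (2 * q))) \<in> R" and q: "q \<ge> 1" and Uq: "U (of_nat q)"
    and three: "(3::'a) = 0"
  shows "U (1 + of_nat (q - 1) * z ^ q)"
proof (cases "U z")
  case False
  then have "N z" using UN[OF z] by auto
  then have "N (of_nat (q - 1) * z ^ q)" using N_mult'[OF N_power[OF _ q] sr_of_nat[OF srR]] by blast
  then show ?thesis using U_add_N[OF U_1] by blast
next
  case True
  define y where "y = z ^ q"
  have y: "U y" using U_power[OF True] unfolding y_def by blast
  have yR: "y \<in> R" using UR[OF y] .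
  have z2: "z ^ (2 * q) = y ^ 2" unfolding y_def by (simp add: power_mult mult.commute)
  have gR: "1 + y + y ^ 2 \<in> R" using srR yR by (intro sr_add sr_1 sr_power)
  have g: "N (1 + y + y ^ 2)" by (rule gN[OF z True gR _ ]) (use fz z2 y_def in auto)
  have "1 + y + y ^ 2 = (y - 1) ^ 2 + 3 * y" by (simp add: algebra_simps power2_eq_square)
  then have "1 + y + y ^ 2 = (y - 1) ^ 2" using three by simp
  with g have g2: "N ((y - 1) ^ 2)" by simp
  have ym: "y - 1 \<in> R" using srR yR by (intro sr_diff sr_1)
  have "N (y - 1)"
  proof (rule ccontr)
    assume "\<not> N (y - 1)"
    then have "U (y - 1)" using UN[OF ym] by auto
    then have "U ((y - 1) ^ 2)" by (rule U_power)
    then show False using g2 N_not_U by blast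
  qed
  then have n: "N (of_nat (q - 1) * (y - 1))" using N_mult'[OF _ sr_of_nat[OF srR]] by blast
  have eq: "1 + of_nat (q - 1) * z ^ q = of_nat q + of_nat (q - 1) * (y - 1)"
    using q unfolding y_def by (simp add: of_nat_diff algebra_simps)
  show ?thesis unfolding eq by (rule U_add_N[OF Uq n])
qed

end

lemma P1_eval: "poly (smult l ([:0, 1:] * (1 + monom 1 q))) (z::'a::field) = l * (z * (1 + z^q))"
  by (simp add: poly_monom mult_ac)
lemma P2_eval: "poly (smult l ([:0, 1:] * (1 + monom 1 q + monom 1 (2 * q)))) (z::'a::field) = l * (z * (1 + z^q + z^(2*q)))"
  by (simp add: poly_monom mult_ac)
lemma P1_deriv: "q \<ge> 1 \<Longrightarrow> poly (pderiv (smult l ([:0, 1:] * (1 + monom (1::'a::field) q)))) z = l * (1 + of_nat (q+1) * z^q)"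
  by (cases q) (simp_all add: poly_monom pderiv_mult pderiv_monom pderiv_add pderiv_smult pderiv_pCons algebra_simps)
lemma P2_deriv: "q \<ge> 1 \<Longrightarrow> poly (pderiv (smult l ([:0, 1:] * (1 + monom (1::'a::field) q + monom 1 (2*q))))) z = l * (1 + of_nat (q+1) * z^q + of_nat (2*q+1) * z^(2*q))"
  by (cases q) (simp_all add: poly_monom pderiv_mult pderiv_monom pderiv_add pderiv_smult pderiv_pCons algebra_simps)

theorem lemma5p9:
  fixes l :: "'a::field" and q :: nat and P :: "'a poly"
  assumes "transcendental_over_prime_field l"
    and "q \<ge> 1"
    and "CHAR('a) > 0 \<longrightarrow> \<not> CHAR('a) dvd q"
    and "P = smult l ([:0, 1:] * (1 + monom 1 q))
         \<or> P = smult l ([:0, 1:] * (1 + monom 1 q + monom 1 (2 * q)))"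
  shows "\<not> (\<exists>z0::'a. parabolic_periodic_point P z0)"
proof
  assume "\<exists>z0::'a. parabolic_periodic_point P z0"
  then obtain z0 n where n1: "n \<ge> 1" and per0: "poly (poly_iter P n) z0 = z0"
    and ru0: "root_of_unity (poly (pderiv (poly_iter P n)) z0)"
    unfolding parabolic_periodic_point_def by blast
  have l0: "l \<noteq> 0" using transc_nz[OF assms(1)] .
  obtain R where mR: "maxr l R" using exists_maxr[OF assms(1)] by blast
  interpret vr l R using mR l0 by unfold_locales
  have q: "q \<ge> 1" using assms(2) .
  have q0: "of_nat q \<noteq> (0::'a)"
  proof
    assume "of_nat q = (0::'a)"
    then have "CHAR('a) dvd q" by (simp add: of_nat_eq_0_iff_char_dvd)
    then show False using assms(3) q by (cases "CHAR('a) = 0") auto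
  qed
  have Uq: "U (of_nat q)" using U_nat[OF q0] .
  define f where "f = poly P"
  define D where "D = poly (pderiv P)"
  have per: "(f ^^ n) z0 = z0" using per0 unfolding f_def poly_iter_eval .
  have ru: "root_of_unity (\<Prod>i<n. D ((f ^^ i) z0))" using ru0 unfolding f_def D_def poly_iter_deriv .
  from assms(4) show False
  proof
    assume P: "P = smult l ([:0, 1:] * (1 + monom 1 q))"
    have fe: "f z = l * (z * (1 + z ^ q))" for z unfolding f_def P by (rule P1_eval)
    have De: "D z = l * (1 + of_nat (q + 1) * z ^ q)" for z unfolding D_def P by (rule P1_deriv[OF q])
    show False
    proof (rule main_simple[of f D n z0, OF _ _ per n1 ru])
      fix z assume "z \<notin> R"
      then show "f z \<notin> R \<and> (\<exists>t. N t \<and> inverse (f z) = inverse z * t)" unfolding fe using esc1 q by blast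
    next
      fix z assume "z \<in> R" "f z \<in> R"
      then have "U (1 + of_nat (q + 1) * z ^ q)" using stepB1[OF _ _ q Uq] unfolding fe by blast
      moreover have "D z * inverse l = 1 + of_nat (q + 1) * z ^ q" unfolding De using l0 by (simp add: field_simps)
      ultimately show "U (D z * inverse l)" by simp
    qed
  next
    assume P: "P = smult l ([:0, 1:] * (1 + monom 1 q + monom 1 (2 * q)))"
    have fe: "f z = l * (z * (1 + z ^ q + z ^ (2 * q)))" for z unfolding f_def P by (rule P2_eval)
    have De: "D z = l * (1 + of_nat (q + 1) * z ^ q + of_nat (2 * q + 1) * z ^ (2 * q))" for z
      unfolding D_def P by (rule P2_deriv[OF q])
    have esc: "f z \<notin> R \<and> (\<exists>t. N t \<and> inverse (f z) = inverse z * t)" if "z \<notin> R" for z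
      unfolding fe using esc2 q that by blast
    show False
    proof (cases "(3::'a) = 0")
      case False
      show False
      proof (rule main_simple[of f D n z0, OF esc _ per n1 ru])
        fix z assume "z \<in> R" "f z \<in> R"
        then have "U (1 + of_nat (q + 1) * z ^ q + of_nat (2 * q + 1) * z ^ (2 * q))"
          using stepB2[OF _ _ q Uq False] unfolding fe by blast
        moreover have "D z * inverse l = 1 + of_nat (q + 1) * z ^ q + of_nat (2 * q + 1) * z ^ (2 * q)"
          unfolding De using l0 by (simp add: field_simps)
        ultimately show "U (D z * inverse l)" by simp
      qed
    next
      case True
      define c where "c = (\<lambda>z::'a. 1 + of_nat (q - 1) * z ^ q)"
      define g where "g = (\<lambda>z::'a. 1 + z ^ q + z ^ (2 * q))"
      define h where "h = (\<lambda>z::'a. 1 - z ^ q)"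
      show False
      proof (rule main_char3[of f c g D h n z0, OF esc _ _ _ _ _ per n1 ru])
        fix z assume "z \<in> R" "f z \<in> R"
        then show "U (c z)" unfolding c_def using stepC[OF _ _ q Uq True] unfolding fe by blast
      next
        fix z show "f z = l * (z * g z)" unfolding fe g_def ..
      next
        fix z :: 'a
        define y where "y = z ^ q"
        have z2: "z ^ (2 * q) = y ^ 2" unfolding y_def by (simp add: power_mult mult.commute)
        have "1 + of_nat (q + 1) * y + of_nat (2 * q + 1) * y ^ 2 = (1 - y) * (1 + of_nat (q - 1) * y) + 3 * (y + of_nat q * y ^ 2)"
          using q by (simp add: of_nat_diff algebra_simps power2_eq_square)
        then show "D z = l * (h z * c z)" unfolding De h_def c_def z2 y_def[symmetric] using True by simp
      next
        fix z :: 'a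
        define y where "y = z ^ q"
        have z2: "z ^ (2 * q) = y ^ 2" unfolding y_def by (simp add: power_mult mult.commute)
        have "1 + y + y ^ 2 = (1 - y) ^ 2 + 3 * y" by (simp add: algebra_simps power2_eq_square)
        then show "h z ^ 2 = g z" unfolding h_def g_def z2 y_def[symmetric] using True by simp
      next
        have o1: "(0::'a) ^ q = 0" and o2: "(0::'a) ^ (2 * q) = 0" using q by (simp_all add: power_0_left)
        have "D 0 * inverse l = 1" unfolding De o1 o2 using l0 by simp
        then show "U (D 0 * inverse l)" using U_1 by simp
      qed
    qed
  qed
qed

end
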